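(* Let $n \ge 3$ and let $x_1 < x_2 < \dots < x_n$ be real numbers; let $h(z) = \prod_{j=1}^n (x_j - z)$ and $q(z) = z - n\,h(z)/h'(z)$. Let $\theta \in \mathbb{C}$ and $R = \max\{|\theta - x_j| : 1 \le j \le n\}$, and let $\overline{B(\theta,R)}$ be the closed disc with center $\theta$ and radius $R$. Then $q\left(\mathbb{C} \setminus \overline{B(\theta,R)}\right) \subset \overline{B(\theta,R)}$. *)

theory Defs
  imports "HOL-Analysis.Analysis" "HOL-Computational_Algebra.Polynomial"
begin

definition hpoly :: "nat \<Rightarrow> (nat \<Rightarrow> real) \<Rightarrow> complex poly" where
  "hpoly n x = (\<Prod>j\<in>{1..n}. [:complex_of_real (x j), -1:])"

definition qmap :: "nat \<Rightarrow> (nat \<Rightarrow> real) \<Rightarrow> complex \<Rightarrow> complex" where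
  "qmap n x z = z - of_nat n * poly (hpoly n x) z / poly (pderiv (hpoly n x)) z"

end

theory Submission
  imports Defs
begin

lemma cmod_sq_expand:
  fixes a w :: complex and k :: real
  shows "(cmod (a*w - of_real k))^2 = (cmod a)^2 * (cmod w)^2 - 2 * k * Re (a*w) + k^2"
proof -
  have "(cmod (a*w - of_real k))^2 = (cmod (a*w))^2 - 2 * k * Re (a*w) + k^2"
    by (simp only: cmod_power2) (simp add: power2_eq_square algebra_simps)
  then show ?thesis by (simp add: norm_mult power_mult_distrib)
qed

lemma lin_aux:
  fixes K T U A B :: real
  assumes "K - T + U \<le> 0" "K = A - B"
  shows "A - T + U \<le> B"
  using assms by linarith

theorem mainTheorem9:
  fixes n :: nat and x :: "nat \<Rightarrow> real" and \<theta> :: complex and R :: real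
  assumes "n \<ge> 3"
    and "\<And>i j. 1 \<le> i \<Longrightarrow> i < j \<Longrightarrow> j \<le> n \<Longrightarrow> x i < x j"
    and "R = Max ((\<lambda>j. cmod (\<theta> - complex_of_real (x j))) ` {1..n})"
  shows "qmap n x ` (- cball \<theta> R) \<subseteq> cball \<theta> R"
proof
  fix y assume "y \<in> qmap n x ` (- cball \<theta> R)"
  then obtain z where zn: "z \<notin> cball \<theta> R" and y: "y = qmap n x z" by auto
  define I where "I = {1..n}"
  have fI: "finite I" and cI: "card I = n" by (auto simp: I_def)
  have Rj: "cmod (\<theta> - of_real (x j)) \<le> R" if "j \<in> I" for j
    using that fI unfolding assms(3) I_def by (intro Max_ge) auto
  define a where "a = z - \<theta>"
  have aR: "cmod a > R" using zn by (simp add: a_def dist_norm norm_minus_commute)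
  have R0: "R \<ge> 0" using Rj[of 1] assms(1) by (auto simp: I_def intro: order_trans[OF norm_ge_zero])
  have zx: "z - of_real (x j) \<noteq> 0" if "j \<in> I" for j
  proof
    assume "z - of_real (x j) = 0"
    then have "z = of_real (x j)" by simp
    then show False using Rj[OF that] aR by (simp add: a_def norm_minus_commute)
  qed
  define w where "w j = 1 / (z - of_real (x j))" for j
  define S where "S = (\<Sum>j\<in>I. w j)"
  define c where "c = (cmod a)^2 - R^2"
  have c0: "c > 0" using power_strict_mono[of R "cmod a" 2] aR R0 unfolding c_def by simp
  have gj: "c * (cmod (w j))^2 - 2 * Re (a * w j) + 1 \<le> 0" if "j \<in> I" for j
  proof -
    have wne: "w j \<noteq> 0" using zx[OF that] by (simp add: w_def)
    have "a - 1 / w j = of_real (x j) - \<theta>" by (simp add: w_def a_def)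
    then have "cmod (a - 1 / w j) \<le> R" using Rj[OF that] by (simp add: norm_minus_commute)
    moreover have "a * w j - 1 = (a - 1 / w j) * w j" using wne by (simp add: field_simps)
    ultimately have "cmod (a * w j - of_real 1) \<le> R * cmod (w j)"
      by (simp add: norm_mult mult_right_mono)
    then have "(cmod (a * w j - of_real 1))^2 \<le> (R * cmod (w j))^2"
      by (intro power_mono) auto
    then show ?thesis unfolding cmod_sq_expand c_def by (simp add: power_mult_distrib algebra_simps)
  qed
  have ReS: "Re (a * S) = (\<Sum>j\<in>I. Re (a * w j))"
    by (simp only: S_def sum_distrib_left Re_sum)
  have sumg: "c * (\<Sum>j\<in>I. (cmod (w j))^2) - 2 * Re (a * S) + real n \<le> 0"
  proof -
    have "(\<Sum>j\<in>I. c * (cmod (w j))^2 - 2 * Re (a * w j) + 1) \<le> 0"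
      using gj by (intro sum_nonpos) auto
    moreover have "(\<Sum>j\<in>I. c * (cmod (w j))^2 - 2 * Re (a * w j) + 1)
       = c * (\<Sum>j\<in>I. (cmod (w j))^2) - 2 * Re (a * S) + real n"
      using ReS by (simp add: sum.distrib sum_subtractf sum_distrib_left cI)
    ultimately show ?thesis by simp
  qed
  have CS: "(cmod S)^2 \<le> real n * (\<Sum>j\<in>I. (cmod (w j))^2)"
  proof -
    have "cmod S \<le> (\<Sum>j\<in>I. cmod (w j))" unfolding S_def by (rule norm_sum)
    then have "(cmod S)^2 \<le> (\<Sum>j\<in>I. cmod (w j))^2" by (intro power_mono) auto
    also have "\<dots> \<le> (\<Sum>j\<in>I. (cmod (w j))^2) * card I" by (rule sum_squared_le_sum_of_squares)
    finally show ?thesis by (simp add: cI mult.commute)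
  qed
  have key: "c * (cmod S)^2 - 2 * real n * Re (a * S) + (real n)^2 \<le> 0"
  proof -
    have "c * (cmod S)^2 \<le> real n * (c * (\<Sum>j\<in>I. (cmod (w j))^2))"
      using CS c0 by (simp add: mult.left_commute mult_left_mono)
    also have "\<dots> \<le> real n * (2 * Re (a * S) - real n)"
      using sumg by (intro mult_left_mono) auto
    finally show ?thesis by (simp add: power2_eq_square algebra_simps)
  qed
  have S0: "S \<noteq> 0"
  proof
    assume "S = 0"
    with key have "(real n)^2 \<le> 0" by simp
    then show False using assms(1) by simp
  qed
  have dist: "cmod (a - of_nat n / S) \<le> R"
  proof -
    have e1: "(R * cmod S)^2 = R^2 * (cmod S)^2" by (simp only: power_mult_distrib)
    have e2: "c * (cmod S)^2 = (cmod a)^2 * (cmod S)^2 - R^2 * (cmod S)^2"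
      unfolding c_def by (simp only: left_diff_distrib)
    have "(cmod (a * S - of_real (real n)))^2 \<le> (R * cmod S)^2"
    proof -
      have e3: "(cmod (a*S - of_real (real n)))^2 = (cmod a)^2*(cmod S)^2 - 2*real n*Re(a*S) + (real n)^2"
        by (rule cmod_sq_expand)
      show ?thesis unfolding e3 e1 by (rule lin_aux[OF key e2])
    qed
    then have "cmod (a * S - of_real (real n)) \<le> R * cmod S"
      by (rule power2_le_imp_le) (simp add: R0)
    moreover have "a * S - of_real (real n) = (a - of_nat n / S) * S" using S0 by (simp add: field_simps)
    ultimately have "cmod (a - of_nat n / S) * cmod S \<le> R * cmod S" by (simp add: norm_mult)
    then show ?thesis using S0 by simp
  qed
  define P where "P = (\<Prod>j\<in>I. of_real (x j) - z)"
  have P0: "P \<noteq> 0" unfolding P_def using fI zx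
    by (auto simp: prod_zero_iff)
  have hz: "poly (hpoly n x) z = P"
    by (simp add: hpoly_def P_def I_def poly_prod)
  have hdz: "poly (pderiv (hpoly n x)) z = P * S"
  proof -
    have "poly (pderiv (hpoly n x)) z = (\<Sum>k\<in>I. - (\<Prod>j\<in>I-{k}. of_real (x j) - z))"
      by (simp add: hpoly_def pderiv_prod I_def poly_sum poly_prod pderiv_pCons)
    also have "\<dots> = (\<Sum>k\<in>I. P * w k)"
    proof (rule sum.cong)
      fix k assume k: "k \<in> I"
      have "P = (of_real (x k) - z) * (\<Prod>j\<in>I-{k}. of_real (x j) - z)"
        unfolding P_def using fI k by (simp add: prod.remove)
      then show "- (\<Prod>j\<in>I-{k}. of_real (x j) - z) = P * w k"
        using zx[OF k] by (simp add: w_def field_simps)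
    qed simp
    finally show ?thesis by (simp add: S_def sum_distrib_left)
  qed
  have "y = z - of_nat n / S"
    using y P0 by (simp add: qmap_def hz hdz)
  then have "y - \<theta> = a - of_nat n / S" by (simp add: a_def)
  then have "cmod (\<theta> - y) = cmod (a - of_nat n / S)" by (metis norm_minus_commute)
  then show "y \<in> cball \<theta> R" using dist by (simp add: dist_norm)
qed

end
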